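(* Let $k\ge\ell\ge1$ be integers with $k+\ell\ge6$, let $f$ be the function below, and let $\alpha\in[0,\frac12]$. Then the function $$f_*(d)=\alpha(1-\alpha)^{k+\ell}f(d)+\frac{(k-1)^{k-1}\ell^\ell}{(k+\ell-1)^{k+\ell-1}}(1-\alpha)\alpha^{k+\ell}(1-d)$$ attains its maximum over $d\in[0,1]$ at some $d\in\left[\frac{k-1}{k+\ell-1},\frac{k}{k+\ell}\right]$.
   Context: $f:[0,1]\to\mathbb R$ is defined by $f(x)=\frac{(k-1)^{k-1}\ell^\ell}{(k+\ell-1)^{k+\ell-1}}x$ for $x\in[0,\frac{k-1}{k+\ell-1}]$, $f(x)=x^k(1-x)^\ell$ for $x\in[\frac{k-1}{k+\ell-1},\frac{k}{k+\ell}]$, and $f(x)=\frac{k^k\ell^\ell}{(k+\ell)^{k+\ell}}$ for $x\in[\frac{k}{k+\ell},1]$. *)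

theory Defs
  imports Complex_Main
begin

(* The constant (k-1)^(k-1) l^l / (k+l-1)^(k+l-1); with 0^0 = 1. Requires k >= 1. *)
definition cst :: "nat \<Rightarrow> nat \<Rightarrow> real" where
  "cst k l = (real k - 1) ^ (k - 1) * (real l) ^ l / (real k + real l - 1) ^ (k + l - 1)"

definition fpw :: "nat \<Rightarrow> nat \<Rightarrow> real \<Rightarrow> real" where
  "fpw k l x =
     (if x \<le> (real k - 1) / (real k + real l - 1) then cst k l * x
      else if x \<le> real k / (real k + real l) then x ^ k * (1 - x) ^ l
      else (real k) ^ k * (real l) ^ l / (real k + real l) ^ (k + l))"

definition fstar :: "nat \<Rightarrow> nat \<Rightarrow> real \<Rightarrow> real \<Rightarrow> real" where
  "fstar k l \<alpha> d = \<alpha> * (1 - \<alpha>) ^ (k + l) * fpw k l d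
      + cst k l * (1 - \<alpha>) * \<alpha> ^ (k + l) * (1 - d)"

end

theory Submission
  imports Defs
begin

theorem lemma2p5:
  fixes k l :: nat and \<alpha> :: real
  assumes "k \<ge> l" and "l \<ge> 1" and "k + l \<ge> 6"
    and "0 \<le> \<alpha>" and "\<alpha> \<le> 1/2"
  shows "\<exists>d. (real k - 1) / (real k + real l - 1) \<le> d \<and> d \<le> real k / (real k + real l)
            \<and> (\<forall>x\<in>{0..1}. fstar k l \<alpha> x \<le> fstar k l \<alpha> d)"
proof -
  define a where "a = (real k - 1) / (real k + real l - 1)"
  define b where "b = real k / (real k + real l)"
  define A where "A = \<alpha> * (1 - \<alpha>) ^ (k + l)"
  define B where "B = cst k l * (1 - \<alpha>) * \<alpha> ^ (k + l)"
  define M where "M = (real k) ^ k * (real l) ^ l / (real k + real l) ^ (k + l)"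
  have k1: "k \<ge> 1" using assms by simp
  have pos: "real k + real l - 1 > 0" using assms by simp
  have a0: "0 \<le> a" unfolding a_def using k1 pos by simp
  have ab: "a \<le> b" unfolding a_def b_def using pos k1
    by (simp add: divide_simps) (simp add: algebra_simps)
  have b1: "b \<le> 1" unfolding b_def using pos by (simp add: divide_simps)
  have oma: "1 - a = real l / (real k + real l - 1)" unfolding a_def using pos
    by (simp add: field_simps)
  have c_eq: "cst k l = a ^ (k - 1) * (1 - a) ^ l"
  proof -
    have "(real k + real l - 1) ^ (k + l - 1) = (real k + real l - 1) ^ (k - 1) * (real k + real l - 1) ^ l"
      using k1 by (metis Nat.add_diff_assoc2 power_add)
    then show ?thesis unfolding cst_def oma unfolding a_def
      by (simp add: power_divide)
  qed
  have c0: "cst k l \<ge> 0" unfolding c_eq using a0 ab b1 by simp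
  have ca: "cst k l * a = a ^ k * (1 - a) ^ l"
    unfolding c_eq using k1 by (metis (no_types, lifting) Suc_diff_1 less_le_trans mult.commute
        mult.left_commute power_Suc zero_less_one)
  have omb: "1 - b = real l / (real k + real l)" unfolding b_def using pos
    by (simp add: field_simps)
  have Mb: "M = b ^ k * (1 - b) ^ l" unfolding M_def omb unfolding b_def
    by (simp add: power_divide power_add)
  have A0: "A \<ge> 0" unfolding A_def using assms by simp
  have B0: "B \<ge> 0" unfolding B_def using assms c0 by simp
  have ABc: "A * cst k l - B \<ge> 0"
  proof -
    have "\<alpha> ^ (k + l - 1) \<le> (1 - \<alpha>) ^ (k + l - 1)"
      using assms by (intro power_mono) auto
    then have "\<alpha> * (1 - \<alpha>) * \<alpha> ^ (k + l - 1) \<le> \<alpha> * (1 - \<alpha>) * (1 - \<alpha>) ^ (k + l - 1)"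
      using assms by (intro mult_left_mono) auto
    moreover have "\<alpha> * \<alpha> ^ (k + l - 1) = \<alpha> ^ (k + l)" "(1-\<alpha>) * (1-\<alpha>) ^ (k + l - 1) = (1-\<alpha>) ^ (k + l)"
      using k1 by (metis Suc_diff_1 add_pos_nonneg less_le_trans power_Suc zero_le zero_less_one)+
    ultimately have "(1 - \<alpha>) * \<alpha> ^ (k + l) \<le> \<alpha> * (1 - \<alpha>) ^ (k + l)"
      by (metis mult.assoc mult.commute)
    then have "cst k l * ((1 - \<alpha>) * \<alpha> ^ (k + l)) \<le> cst k l * (\<alpha> * (1 - \<alpha>) ^ (k + l))"
      using c0 by (intro mult_left_mono) auto
    then show ?thesis unfolding A_def B_def by (simp add: algebra_simps)
  qed
  define h where "h x = A * (x ^ k * (1 - x) ^ l) + B * (1 - x)" for x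
  have fs: "fstar k l \<alpha> x = A * fpw k l x + B * (1 - x)" for x
    unfolding fstar_def A_def B_def by simp
  have fmid: "fstar k l \<alpha> x = h x" if "a \<le> x" "x \<le> b" for x
  proof (cases "x = a")
    case True then show ?thesis unfolding fs h_def fpw_def a_def[symmetric] b_def[symmetric]
      using ca by simp
  next
    case False then show ?thesis unfolding fs h_def fpw_def a_def[symmetric] b_def[symmetric]
      using that by simp
  qed
  have "continuous_on {a..b} h" unfolding h_def by (intro continuous_intros)
  then obtain d where d: "d \<in> {a..b}" "\<forall>y\<in>{a..b}. h y \<le> h d"
    using continuous_attains_sup[of "{a..b}" h] ab by auto
  have hd: "fstar k l \<alpha> y \<le> fstar k l \<alpha> d" if "a \<le> y" "y \<le> b" for y
    using d that fmid by auto
  have "fstar k l \<alpha> x \<le> fstar k l \<alpha> d" if x: "x \<in> {0..1}" for x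
  proof (cases "x \<le> a")
    case True
    have e1: "fstar k l \<alpha> x = A * (cst k l * x) + B * (1 - x)"
      unfolding fs fpw_def a_def[symmetric] using True by simp
    have e2: "fstar k l \<alpha> a = A * (cst k l * a) + B * (1 - a)"
      unfolding fs fpw_def a_def[symmetric] by simp
    have "(A * cst k l - B) * x \<le> (A * cst k l - B) * a"
      using ABc True by (intro mult_left_mono) auto
    then have "fstar k l \<alpha> x \<le> fstar k l \<alpha> a" unfolding e1 e2 by (simp add: algebra_simps)
    also have "\<dots> \<le> fstar k l \<alpha> d" using hd ab by simp
    finally show ?thesis .
  next
    case False
    show ?thesis
    proof (cases "x \<le> b")
      case True then show ?thesis using hd False by simp
    next
      case F2: False
      have e1: "fstar k l \<alpha> x = A * M + B * (1 - x)"
        unfolding fs fpw_def a_def[symmetric] b_def[symmetric] M_def using False F2 by simp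
      have "fstar k l \<alpha> b = h b" using fmid ab by simp
      also have "\<dots> = A * M + B * (1 - b)" unfolding h_def Mb by simp
      finally have e2: "fstar k l \<alpha> b = A * M + B * (1 - b)" .
      have "B * (1 - x) \<le> B * (1 - b)" using B0 F2 by (intro mult_left_mono) auto
      then have "fstar k l \<alpha> x \<le> fstar k l \<alpha> b" unfolding e1 e2 by simp
      also have "\<dots> \<le> fstar k l \<alpha> d" using hd ab by simp
      finally show ?thesis .
    qed
  qed
  then show ?thesis using d unfolding a_def b_def by auto
qed

end
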